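(* Consider the system $x(t+1)=Ax(t)+Bu_S(t)$, $y_S(t)=Cx(t)+Du_S(t)$ with $x(t)\in\mathbb{R}^n$, $u_S(t)\in\mathbb{R}^m$, $y_S(t)\in\mathbb{R}^p$, under the attack model $u_S(t)=w(t)$, $y(t)=y_S(t)+a(t)$ (controller-designed input equal to zero), where at most $r$ inputs and at most $s$ outputs are attacked. Suppose $(A,B,C,D)$ is $(2r,2s)$-sparse strongly observable. Let $t\ge n-1$ and let $\Gamma_u\subseteq\{1,\dots,m\}$, $\Gamma_y\subseteq\{1,\dots,p\}$ with $|\Gamma_u|\le r$ and $|\Gamma_y|\ge p-s$. If there exist $\hat{\mathbf{U}}\in\mathbb{R}^{n|\Gamma_u|}$ and $\hat x\in\mathbb{R}^n$ such that $$\mathbf{Y}|_{\Gamma_y}(t)=\mathcal{O}_{\Gamma_y}\hat x+\mathcal{N}_{\Gamma_u\to\Gamma_y}\hat{\mathbf{U}},$$ then $\hat x=x(t-n+1)$.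
   Context: The adversarial signals $w(t)\in\mathbb{R}^m$, $a(t)\in\mathbb{R}^p$ are arbitrary except that there exist fixed unknown sets $\Gamma_u^*\subseteq\{1,\dots,m\}$, $|\Gamma_u^*|\le r$, and $\Lambda^*\subseteq\{1,\dots,p\}$, $|\Lambda^*|\le s$, with $w(t)$ supported in $\Gamma_u^*$ and $a(t)$ supported in $\Lambda^*$ for all $t$. (Standing assumption of the paper's observer design: the known controller-designed input is taken to be zero, its effect having been subtracted from the outputs.) Notation: for $\Theta\subseteq\{1,\dots,p\}$, $\mathbf{Y}|_{\Theta}(t)$ is the stacked vector $[\,y(t-n+1)|_\Theta^T\ \cdots\ y(t)|_\Theta^T\,]^T$, where $y(k)|_\Theta$ keeps only the entries of $y(k)$ indexed by $\Theta$. $\mathcal{O}_{\Theta}=\begin{bmatrix}C_\Theta^T & A^TC_\Theta^T & \cdots & (A^T)^{n-1}C_\Theta^T\end{bmatrix}^T$ with $C_\Theta=C|_{(\Theta,\cdot)}$ (rows of $C$ indexed by $\Theta$). For $\Gamma\subseteq\{1,\dots,m\}$, $\mathcal{N}_{\Gamma\to\Theta}$ is the block lower-triangular Toeplitz matrix with $n$ block rows and $n$ block columns whose diagonal blocks are $D_{\Theta\Gamma}=D|_{(\Theta,\Gamma)}$ and whose $(i,j)$ block for $i>j$ is $C_\Theta A^{i-j-1}B_\Gamma$, with $B_\Gamma=B|_{(\cdot,\Gamma)}$ (columns of $B$ indexed by $\Gamma$). Subsystem $(A,B|_{(\cdot,\Gamma)},C|_{(\Theta,\cdot)},D|_{(\Theta,\Gamma)})$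 keeps the inputs in $\Gamma$ and outputs in $\Theta$. A system is strongly observable if for any initial state and any input sequence there exists $\tau$ such that the initial state is uniquely determined by $y(0),\dots,y(\tau)$ (any initial state producing the same outputs under some input sequence is equal to it). The system is $(r',s')$-sparse strongly observable if every subsystem with input set $\Gamma$, $|\Gamma|\le r'$, and output set $\Theta$, $|\Theta|\ge p-s'$, is strongly observable. *)

theory Defs
  imports Complex_Main
begin

text \<open>Real vectors are functions nat => real (only the entries with index below the
dimension matter); real matrices are functions nat => nat => real.
The product of a matrix M with a vector x, summing only over the column index set S,
is the product of the column-submatrix M|(.,S) with x|S.\<close>

definition mvs :: "nat set \<Rightarrow> (nat \<Rightarrow> nat \<Rightarrow> real) \<Rightarrow> (nat \<Rightarrow> real) \<Rightarrow> nat \<Rightarrow> real" where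
  "mvs S M x i = (\<Sum>j\<in>S. M i j * x j)"

definition mmul :: "nat \<Rightarrow> (nat \<Rightarrow> nat \<Rightarrow> real) \<Rightarrow> (nat \<Rightarrow> nat \<Rightarrow> real) \<Rightarrow> nat \<Rightarrow> nat \<Rightarrow> real" where
  "mmul k M N i j = (\<Sum>l<k. M i l * N l j)"

fun mpow :: "nat \<Rightarrow> (nat \<Rightarrow> nat \<Rightarrow> real) \<Rightarrow> nat \<Rightarrow> nat \<Rightarrow> nat \<Rightarrow> real" where
  "mpow n A 0 = (\<lambda>i j. if i = j then 1 else 0)"
| "mpow n A (Suc k) = mmul n A (mpow n A k)"

fun state :: "(nat \<Rightarrow> nat \<Rightarrow> real) \<Rightarrow> (nat \<Rightarrow> nat \<Rightarrow> real) \<Rightarrow> nat \<Rightarrow> nat \<Rightarrow>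
    (nat \<Rightarrow> real) \<Rightarrow> (nat \<Rightarrow> nat \<Rightarrow> real) \<Rightarrow> nat \<Rightarrow> nat \<Rightarrow> real" where
  "state A B n m x0 u 0 = x0"
| "state A B n m x0 u (Suc t) =
     (\<lambda>i. mvs {..<n} A (state A B n m x0 u t) i + mvs {..<m} B (u t) i)"

definition outp :: "(nat \<Rightarrow> nat \<Rightarrow> real) \<Rightarrow> (nat \<Rightarrow> nat \<Rightarrow> real) \<Rightarrow> (nat \<Rightarrow> nat \<Rightarrow> real) \<Rightarrow>
    (nat \<Rightarrow> nat \<Rightarrow> real) \<Rightarrow> nat \<Rightarrow> nat \<Rightarrow> (nat \<Rightarrow> real) \<Rightarrow> (nat \<Rightarrow> nat \<Rightarrow> real) \<Rightarrow> nat \<Rightarrow> nat \<Rightarrow> real" where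
  "outp A B C D n m x0 u t i =
     mvs {..<n} C (state A B n m x0 u t) i + mvs {..<m} D (u t) i"

text \<open>Strong observability of the subsystem (A, B|(.,Gamma), C|(Theta,.), D|(Theta,Gamma)):
inputs of the subsystem are exactly input sequences supported in Gamma, and only the
outputs indexed by Theta are observed.\<close>
definition strongly_observable_sub ::
  "(nat \<Rightarrow> nat \<Rightarrow> real) \<Rightarrow> (nat \<Rightarrow> nat \<Rightarrow> real) \<Rightarrow> (nat \<Rightarrow> nat \<Rightarrow> real) \<Rightarrow>
   (nat \<Rightarrow> nat \<Rightarrow> real) \<Rightarrow> nat \<Rightarrow> nat \<Rightarrow> nat set \<Rightarrow> nat set \<Rightarrow> bool" where
  "strongly_observable_sub A B C D n m \<Gamma> \<Theta> \<longleftrightarrow>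
     (\<forall>x0 u. (\<forall>t j. j \<notin> \<Gamma> \<longrightarrow> u t j = 0) \<longrightarrow>
       (\<exists>\<tau>. \<forall>x0' u'. (\<forall>t j. j \<notin> \<Gamma> \<longrightarrow> u' t j = 0) \<longrightarrow>
          (\<forall>k\<le>\<tau>. \<forall>i\<in>\<Theta>. outp A B C D n m x0' u' k i = outp A B C D n m x0 u k i) \<longrightarrow>
          (\<forall>i<n. x0' i = x0 i)))"

definition sparse_strongly_observable ::
  "(nat \<Rightarrow> nat \<Rightarrow> real) \<Rightarrow> (nat \<Rightarrow> nat \<Rightarrow> real) \<Rightarrow> (nat \<Rightarrow> nat \<Rightarrow> real) \<Rightarrow>
   (nat \<Rightarrow> nat \<Rightarrow> real) \<Rightarrow> nat \<Rightarrow> nat \<Rightarrow> nat \<Rightarrow> nat \<Rightarrow> nat \<Rightarrow> bool" where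
  "sparse_strongly_observable A B C D n m p r' s' \<longleftrightarrow>
     (\<forall>\<Gamma> \<Theta>. \<Gamma> \<subseteq> {..<m} \<longrightarrow> card \<Gamma> \<le> r' \<longrightarrow> \<Theta> \<subseteq> {..<p} \<longrightarrow> p - s' \<le> card \<Theta> \<longrightarrow>
        strongly_observable_sub A B C D n m \<Gamma> \<Theta>)"

text \<open>Block k (k = 0..n-1) of the observability matrix: C A^k (rows later restricted to Theta).\<close>
definition obs_block :: "nat \<Rightarrow> (nat \<Rightarrow> nat \<Rightarrow> real) \<Rightarrow> (nat \<Rightarrow> nat \<Rightarrow> real) \<Rightarrow> nat \<Rightarrow> nat \<Rightarrow> nat \<Rightarrow> real" where
  "obs_block n A C k = mmul n C (mpow n A k)"

text \<open>Block (k,j) of the block lower-triangular Toeplitz matrix N: D on the diagonal,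
C A^(k-j-1) B below, zero above (columns later restricted to Gamma, rows to Theta).\<close>
definition toep_block :: "nat \<Rightarrow> (nat \<Rightarrow> nat \<Rightarrow> real) \<Rightarrow> (nat \<Rightarrow> nat \<Rightarrow> real) \<Rightarrow> (nat \<Rightarrow> nat \<Rightarrow> real) \<Rightarrow>
    (nat \<Rightarrow> nat \<Rightarrow> real) \<Rightarrow> nat \<Rightarrow> nat \<Rightarrow> nat \<Rightarrow> nat \<Rightarrow> real" where
  "toep_block n A B C D k j =
     (if j = k then D else if j < k then mmul n C (mmul n (mpow n A (k - j - 1)) B) else (\<lambda>_ _. 0))"

text \<open>Block row k of the equation  Y|Theta(t) = O_Theta xh + N_{Gamma->Theta} U,
where block row k refers to time t-n+1+k, xh in R^n and U = (U 0, ..., U (n-1)),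
each U j indexed by Gamma.\<close>
definition stacked_eq ::
  "nat \<Rightarrow> (nat \<Rightarrow> nat \<Rightarrow> real) \<Rightarrow> (nat \<Rightarrow> nat \<Rightarrow> real) \<Rightarrow> (nat \<Rightarrow> nat \<Rightarrow> real) \<Rightarrow>
   (nat \<Rightarrow> nat \<Rightarrow> real) \<Rightarrow> (nat \<Rightarrow> nat \<Rightarrow> real) \<Rightarrow> nat \<Rightarrow> nat set \<Rightarrow> nat set \<Rightarrow>
   (nat \<Rightarrow> real) \<Rightarrow> (nat \<Rightarrow> nat \<Rightarrow> real) \<Rightarrow> bool" where
  "stacked_eq n A B C D y t \<Gamma> \<Theta> xh U \<longleftrightarrow>
     (\<forall>k<n. \<forall>i\<in>\<Theta>.
        y (Suc t - n + k) i =
          mvs {..<n} (obs_block n A C k) xh i + (\<Sum>j<n. mvs \<Gamma> (toep_block n A B C D k j) (U j) i))"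

end

theory Submission imports Defs "HOL-Library.Function_Algebras" begin

definition fsc :: "real \<Rightarrow> (nat \<Rightarrow> real) \<Rightarrow> nat \<Rightarrow> real" where
  "fsc c f = (\<lambda>i. c * f i)"

interpretation FV: vector_space fsc
  by unfold_locales (auto simp: fsc_def algebra_simps)

lemma dim_strict:
  assumes "FV.subspace S" "S \<subset> T" "T \<subseteq> FV.span E" "finite E"
  shows "FV.dim S < FV.dim T"
proof -
  obtain B where B: "B \<subseteq> S" "FV.independent B" "S \<subseteq> FV.span B" "card B = FV.dim S"
    using FV.basis_exists by blast
  obtain B' where B': "B' \<subseteq> T" "FV.independent B'" "T \<subseteq> FV.span B'" "card B' = FV.dim T"
    using FV.basis_exists by blast
  have fB': "finite B'" using FV.independent_span_bound[OF assms(4) B'(2)] B'(1) assms(3) by blast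
  obtain v where v: "v \<in> T" "v \<notin> S" using assms(2) by blast
  have "FV.span B \<subseteq> S" using FV.span_minimal[OF B(1) assms(1)] .
  hence nv: "v \<notin> FV.span B" using v by blast
  have ind: "FV.independent (insert v B)" using FV.independent_insertI[OF nv B(2)] .
  have sub: "insert v B \<subseteq> FV.span B'" using B(1) assms(2) v B'(3) by blast
  have "finite (insert v B) \<and> card (insert v B) \<le> card B'"
    using FV.independent_span_bound[OF fB' ind sub] .
  moreover have "v \<notin> B" using v B(1) by blast
  ultimately show ?thesis using B(4) B'(4) by auto
qed

lemma chain_stab:
  fixes W :: "nat \<Rightarrow> (nat\<Rightarrow>real) set"
  assumes sub: "\<And>k. FV.subspace (W k)" and mono: "\<And>k. W (Suc k) \<subseteq> W k"
    and W0: "W 0 \<subseteq> FV.span E" and fin: "finite E" and cE: "card E \<le> n"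
  shows "\<exists>k\<le>n. W (Suc k) = W k"
proof (rule ccontr)
  assume "\<not> ?thesis"
  hence ne: "\<And>k. k \<le> n \<Longrightarrow> W (Suc k) \<subset> W k" using mono by blast
  have span: "W k \<subseteq> FV.span E" for k
  proof (induction k)
    case 0 then show ?case using W0 .
  next
    case (Suc k) then show ?case using mono[of k] by blast
  qed
  have "FV.dim (W k) + k \<le> n" if "k \<le> Suc n" for k
    using that
  proof (induction k)
    case 0 then show ?case using FV.dim_le_card[OF W0 fin] cE by simp
  next
    case (Suc k)
    have "FV.dim (W (Suc k)) < FV.dim (W k)"
      using dim_strict[OF sub ne span fin] Suc.prems by simp
    then show ?case using Suc by simp
  qed
  from this[of "Suc n"] show False by simp
qed

lemma mvs_add: "finite S \<Longrightarrow> mvs S M (\<lambda>a. x a + y a) i = mvs S M x i + mvs S M y i"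
  by (simp add: mvs_def sum.distrib algebra_simps)

lemma mvs_scale: "mvs S M (\<lambda>a. c * x a) i = c * mvs S M x i"
  by (simp add: mvs_def sum_distrib_left algebra_simps)

lemma state_add:
  "state A B n m (\<lambda>a. x1 a + x2 a) (\<lambda>t a. u1 t a + u2 t a) k = (\<lambda>i. state A B n m x1 u1 k i + state A B n m x2 u2 k i)"
proof (induction k)
  case (Suc k) show ?case by (rule ext) (simp add: Suc mvs_add)
qed simp

lemma state_scale:
  "state A B n m (\<lambda>a. c * x a) (\<lambda>t a. c * u t a) k = (\<lambda>i. c * state A B n m x u k i)"
proof (induction k)
  case (Suc k) show ?case by (rule ext) (simp add: Suc mvs_scale algebra_simps)
qed simp

lemma outp_add:
  "outp A B C D n m (\<lambda>a. x1 a + x2 a) (\<lambda>t a. u1 t a + u2 t a) k i = outp A B C D n m x1 u1 k i + outp A B C D n m x2 u2 k i"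
  by (simp add: outp_def state_add mvs_add)

lemma outp_scale:
  "outp A B C D n m (\<lambda>a. c * x a) (\<lambda>t a. c * u t a) k i = c * outp A B C D n m x u k i"
  by (simp add: outp_def state_scale mvs_scale algebra_simps)

lemma state_shift:
  "state A B n m x u (Suc j) = state A B n m (state A B n m x u (Suc 0)) (\<lambda>q. u (Suc q)) j"
proof (induction j)
  case 0 show ?case by simp
next
  case (Suc j)
  have "state A B n m x u (Suc (Suc j)) =
      (\<lambda>i. mvs {..<n} A (state A B n m x u (Suc j)) i + mvs {..<m} B (u (Suc j)) i)"
    by (rule state.simps(2))
  also have "\<dots> = (\<lambda>i. mvs {..<n} A (state A B n m (state A B n m x u (Suc 0)) (\<lambda>q. u (Suc q)) j) i
      + mvs {..<m} B ((\<lambda>q. u (Suc q)) j) i)"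
    by (simp only: Suc)
  also have "\<dots> = state A B n m (state A B n m x u (Suc 0)) (\<lambda>q. u (Suc q)) (Suc j)"
    by (rule state.simps(2)[symmetric])
  finally show ?case .
qed

lemma outp_shift:
  "outp A B C D n m x u (Suc j) i = outp A B C D n m (state A B n m x u (Suc 0)) (\<lambda>q. u (Suc q)) j i"
  unfolding outp_def by (subst state_shift) (rule refl)

definition trunc :: "nat \<Rightarrow> (nat \<Rightarrow> real) \<Rightarrow> nat \<Rightarrow> real" where
  "trunc n x = (\<lambda>i. if i < n then x i else 0)"

lemma mvs_cong_lt: "(\<And>l. l < n \<Longrightarrow> x l = y l) \<Longrightarrow> mvs {..<n} M x i = mvs {..<n} M y i"
  by (simp add: mvs_def)

lemma state_trunc: "i < n \<Longrightarrow> state A B n m (trunc n x) u k i = state A B n m x u k i"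
proof (induction k arbitrary: i)
  case 0 then show ?case by (simp add: trunc_def)
next
  case (Suc k)
  have "mvs {..<n} A (state A B n m (trunc n x) u k) i = mvs {..<n} A (state A B n m x u k) i"
    by (rule mvs_cong_lt) (use Suc in auto)
  then show ?case by simp
qed

lemma outp_trunc: "outp A B C D n m (trunc n x) u k i = outp A B C D n m x u k i"
  unfolding outp_def by (simp only: mvs_cong_lt[OF state_trunc])

lemma state_zero: "state A B n m (\<lambda>_. 0) (\<lambda>_ _. 0) k = (\<lambda>_. 0)"
  by (induction k) (auto simp: mvs_def)

lemma outp_zero: "outp A B C D n m (\<lambda>_. 0) (\<lambda>_ _. 0) k i = 0"
  by (simp add: outp_def state_zero mvs_def)


definition Wset where
  "Wset A B C D n m \<Gamma> \<Theta> k = {z. (\<forall>i\<ge>n. z i = 0) \<and> (\<exists>e. (\<forall>t j. j \<notin> \<Gamma> \<longrightarrow> e t j = 0) \<and>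
      (\<forall>j<k. \<forall>i\<in>\<Theta>. outp A B C D n m z e j i = (0::real)))}"

lemma W_subspace: "FV.subspace (Wset A B C D n m \<Gamma> \<Theta> k)"
proof (rule FV.subspaceI)
  show "0 \<in> Wset A B C D n m \<Gamma> \<Theta> k"
    unfolding Wset_def zero_fun_def using outp_zero[of A B C D n m] by (auto intro!: exI[of _ "\<lambda>_ _. 0"])
next
  fix x y assume "x \<in> Wset A B C D n m \<Gamma> \<Theta> k" "y \<in> Wset A B C D n m \<Gamma> \<Theta> k"
  then obtain e1 e2 where x: "\<forall>i\<ge>n. x i = 0" "\<forall>t j. j \<notin> \<Gamma> \<longrightarrow> e1 t j = 0" "\<forall>j<k. \<forall>i\<in>\<Theta>. outp A B C D n m x e1 j i = 0"
    and y: "\<forall>i\<ge>n. y i = 0" "\<forall>t j. j \<notin> \<Gamma> \<longrightarrow> e2 t j = 0" "\<forall>j<k. \<forall>i\<in>\<Theta>. outp A B C D n m y e2 j i = 0"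
    unfolding Wset_def by blast
  show "x + y \<in> Wset A B C D n m \<Gamma> \<Theta> k"
    unfolding Wset_def plus_fun_def using x y
    by (auto simp: outp_add intro!: exI[of _ "\<lambda>t a. e1 t a + e2 t a"])
next
  fix c x assume "x \<in> Wset A B C D n m \<Gamma> \<Theta> k"
  then obtain e1 where x: "\<forall>i\<ge>n. x i = 0" "\<forall>t j. j \<notin> \<Gamma> \<longrightarrow> e1 t j = 0" "\<forall>j<k. \<forall>i\<in>\<Theta>. outp A B C D n m x e1 j i = 0"
    unfolding Wset_def by blast
  show "fsc c x \<in> Wset A B C D n m \<Gamma> \<Theta> k"
    unfolding Wset_def fsc_def using x
    by (auto simp: outp_scale intro!: exI[of _ "\<lambda>t a. c * e1 t a"])
qed

lemma W_antimono: "k \<le> j \<Longrightarrow> Wset A B C D n m \<Gamma> \<Theta> j \<subseteq> Wset A B C D n m \<Gamma> \<Theta> k"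
proof
  fix z assume kj: "k \<le> j" and "z \<in> Wset A B C D n m \<Gamma> \<Theta> j"
  then obtain e where z: "\<forall>i\<ge>n. z i = 0" and e: "\<forall>t j. j \<notin> \<Gamma> \<longrightarrow> e t j = 0"
      and ze: "\<forall>j'<j. \<forall>i\<in>\<Theta>. outp A B C D n m z e j' i = 0"
    unfolding Wset_def by blast
  have "\<forall>j'<k. \<forall>i\<in>\<Theta>. outp A B C D n m z e j' i = 0"
    using ze kj by (meson order_less_le_trans)
  then show "z \<in> Wset A B C D n m \<Gamma> \<Theta> k" unfolding Wset_def using z e by blast
qed

lemma W_mono: "Wset A B C D n m \<Gamma> \<Theta> (Suc k) \<subseteq> Wset A B C D n m \<Gamma> \<Theta> k"
  by (rule W_antimono) simp

lemma W_stab: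
  assumes "Wset A B C D n m \<Gamma> \<Theta> (Suc k) = Wset A B C D n m \<Gamma> \<Theta> k"
  shows "Wset A B C D n m \<Gamma> \<Theta> (Suc (Suc k)) = Wset A B C D n m \<Gamma> \<Theta> (Suc k)"
proof
  show "Wset A B C D n m \<Gamma> \<Theta> (Suc (Suc k)) \<subseteq> Wset A B C D n m \<Gamma> \<Theta> (Suc k)" by (rule W_mono)
next
  show "Wset A B C D n m \<Gamma> \<Theta> (Suc k) \<subseteq> Wset A B C D n m \<Gamma> \<Theta> (Suc (Suc k))"
  proof
    fix z assume "z \<in> Wset A B C D n m \<Gamma> \<Theta> (Suc k)"
    then obtain e where z: "\<forall>i\<ge>n. z i = 0" and e: "\<forall>t j. j \<notin> \<Gamma> \<longrightarrow> e t j = 0"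
      and ze: "\<forall>j<Suc k. \<forall>i\<in>\<Theta>. outp A B C D n m z e j i = 0"
      unfolding Wset_def by blast
    define z' where "z' = trunc n (state A B n m z e (Suc 0))"
    have "z' \<in> Wset A B C D n m \<Gamma> \<Theta> k"
      unfolding Wset_def
    proof (intro CollectI conjI exI[of _ "\<lambda>q. e (Suc q)"])
      show "\<forall>i\<ge>n. z' i = 0" by (simp add: z'_def trunc_def)
      show "\<forall>t j. j \<notin> \<Gamma> \<longrightarrow> e (Suc t) j = 0" using e by blast
      show "\<forall>j<k. \<forall>i\<in>\<Theta>. outp A B C D n m z' (\<lambda>q. e (Suc q)) j i = 0"
        using ze unfolding z'_def outp_trunc by (metis outp_shift Suc_mono)
    qed
    then have "z' \<in> Wset A B C D n m \<Gamma> \<Theta> (Suc k)" using assms by simp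
    then obtain e'' where e'': "\<forall>t j. j \<notin> \<Gamma> \<longrightarrow> e'' t j = 0"
      and ze'': "\<forall>j<Suc k. \<forall>i\<in>\<Theta>. outp A B C D n m z' e'' j i = 0"
      unfolding Wset_def by blast
    define eh where "eh = (\<lambda>q. if q = 0 then e 0 else e'' (q - 1))"
    have s1: "state A B n m z eh (Suc 0) = state A B n m z e (Suc 0)" by (simp add: eh_def)
    have sh: "(\<lambda>q. eh (Suc q)) = e''" by (simp add: eh_def)
    have "\<forall>j<Suc (Suc k). \<forall>i\<in>\<Theta>. outp A B C D n m z eh j i = 0"
    proof (intro allI impI ballI)
      fix j i assume j: "j < Suc (Suc k)" and i: "i \<in> \<Theta>"
      show "outp A B C D n m z eh j i = 0"
      proof (cases j)
        case 0 then show ?thesis using ze[rule_format, of 0 i] i by (simp add: outp_def eh_def)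
      next
        case (Suc j')
        have "outp A B C D n m z eh j i = outp A B C D n m z' e'' j' i"
          unfolding Suc outp_shift s1 sh z'_def outp_trunc ..
        then show ?thesis using ze'' i j Suc by simp
      qed
    qed
    moreover have "\<forall>t j. j \<notin> \<Gamma> \<longrightarrow> eh t j = 0" using e e'' by (simp add: eh_def)
    ultimately show "z \<in> Wset A B C D n m \<Gamma> \<Theta> (Suc (Suc k))"
      unfolding Wset_def using z by blast
  qed
qed

lemma W_stab_all:
  assumes "Wset A B C D n m \<Gamma> \<Theta> (Suc k) = Wset A B C D n m \<Gamma> \<Theta> k"
  shows "Wset A B C D n m \<Gamma> \<Theta> (k + d) = Wset A B C D n m \<Gamma> \<Theta> k"
proof -
  have st: "Wset A B C D n m \<Gamma> \<Theta> (Suc (k + d)) = Wset A B C D n m \<Gamma> \<Theta> (k + d)" for d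
    by (induction d) (use assms W_stab in auto)
  show ?thesis by (induction d) (use st in auto)
qed

lemma sum_fun_apply: "finite S \<Longrightarrow> (sum f S) x = (\<Sum>i\<in>S. f i x)"
  by (induction S rule: finite_induct) (auto simp: plus_fun_def zero_fun_def)

lemma W0_span:
  "Wset A B C D n m \<Gamma> \<Theta> 0 \<subseteq> FV.span ((\<lambda>i j. if j = i then 1 else 0) ` {..<n})"
proof
  fix z assume "z \<in> Wset A B C D n m \<Gamma> \<Theta> 0"
  hence z: "\<forall>i\<ge>n. z i = 0" unfolding Wset_def by blast
  have "z = (\<Sum>i<n. fsc (z i) (\<lambda>j. if j = i then 1 else 0))"
  proof (rule ext)
    fix x
    have fx: "(\<lambda>i. z i * (if x = i then 1 else 0)) = (\<lambda>i. if x = i then z i else 0)" by auto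
    have "(\<Sum>i<n. fsc (z i) (\<lambda>j. if j = i then 1 else 0)) x = (\<Sum>i<n. z i * (if x = i then 1 else 0))"
      by (simp add: sum_fun_apply fsc_def)
    also have "\<dots> = (\<Sum>i<n. if x = i then z i else 0)" by (simp only: fx)
    also have "\<dots> = z x" using z by (simp add: sum.delta not_less)
    finally show "z x = (\<Sum>i<n. fsc (z i) (\<lambda>j. if j = i then 1 else 0)) x" by simp
  qed
  also have "\<dots> \<in> FV.span ((\<lambda>i j. if j = i then 1 else 0) ` {..<n})"
    by (intro FV.span_sum FV.span_scale FV.span_base) auto
  finally show "z \<in> FV.span ((\<lambda>i j. if j = i then (1::real) else 0) ` {..<n})" .
qed



lemma nstep:
  assumes so: "strongly_observable_sub A B C D n m \<Gamma> \<Theta>"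
    and e: "\<forall>t j. j \<notin> \<Gamma> \<longrightarrow> e t j = 0"
    and Z: "\<forall>k<n. \<forall>i\<in>\<Theta>. outp A B C D n m z e k i = 0"
  shows "\<forall>i<n. z i = 0"
proof -
  have so': "\<forall>x0 u. (\<forall>t j. j \<notin> \<Gamma> \<longrightarrow> u t j = 0) \<longrightarrow>
       (\<exists>\<tau>. \<forall>x0' u'. (\<forall>t j. j \<notin> \<Gamma> \<longrightarrow> u' t j = 0) \<longrightarrow>
          (\<forall>k\<le>\<tau>. \<forall>i\<in>\<Theta>. outp A B C D n m x0' u' k i = outp A B C D n m x0 u k i) \<longrightarrow>
          (\<forall>i<n. x0' i = x0 i))"
    using so unfolding strongly_observable_sub_def .
  have "\<exists>\<tau>. \<forall>x0' u'. (\<forall>t j. j \<notin> \<Gamma> \<longrightarrow> u' t j = 0) \<longrightarrow>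
          (\<forall>k\<le>\<tau>. \<forall>i\<in>\<Theta>. outp A B C D n m x0' u' k i = outp A B C D n m (\<lambda>_. 0) (\<lambda>_ _. 0) k i) \<longrightarrow>
          (\<forall>i<n. x0' i = (0::real))"
    using so'[rule_format, of "\<lambda>_ _. 0" "\<lambda>_. 0"] by simp
  then obtain \<tau> where tau: "\<forall>x0' u'. (\<forall>t j. j \<notin> \<Gamma> \<longrightarrow> u' t j = 0) \<longrightarrow>
          (\<forall>k\<le>\<tau>. \<forall>i\<in>\<Theta>. outp A B C D n m x0' u' k i = outp A B C D n m (\<lambda>_. 0) (\<lambda>_ _. 0) k i) \<longrightarrow>
          (\<forall>i<n. x0' i = (0::real))" by blast
  let ?W = "Wset A B C D n m \<Gamma> \<Theta>"
  have zW: "trunc n z \<in> ?W n"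
    unfolding Wset_def
  proof (intro CollectI conjI exI[of _ e])
    show "\<forall>i\<ge>n. trunc n z i = 0" by (simp add: trunc_def)
    show "\<forall>t j. j \<notin> \<Gamma> \<longrightarrow> e t j = 0" using e .
    show "\<forall>j<n. \<forall>i\<in>\<Theta>. outp A B C D n m (trunc n z) e j i = 0" using Z by (simp add: outp_trunc)
  qed
  obtain k where k: "k \<le> n" "?W (Suc k) = ?W k"
    using chain_stab[of ?W "(\<lambda>i j. if j = i then 1 else 0) ` {..<n}" n, OF W_subspace W_mono W0_span]
      card_image_le[of "{..<n}"] by auto
  have "trunc n z \<in> ?W (Suc \<tau>)"
  proof (cases "Suc \<tau> \<le> n")
    case True then show ?thesis using zW W_antimono by blast
  next
    case False
    have "?W n = ?W k" using W_stab_all[OF k(2), of "n - k"] k(1) by simp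
    moreover have "?W (Suc \<tau>) = ?W k" using W_stab_all[OF k(2), of "Suc \<tau> - k"] k(1) False by simp
    ultimately show ?thesis using zW by simp
  qed
  then obtain e' where e': "\<forall>t j. j \<notin> \<Gamma> \<longrightarrow> e' t j = 0"
    and Z': "\<forall>j<Suc \<tau>. \<forall>i\<in>\<Theta>. outp A B C D n m (trunc n z) e' j i = 0"
    unfolding Wset_def by blast
  have "\<forall>i<n. trunc n z i = 0"
  proof (rule tau[THEN spec, THEN spec, THEN mp, THEN mp])
    show "\<forall>t j. j \<notin> \<Gamma> \<longrightarrow> e' t j = 0" using e' .
    show "\<forall>k\<le>\<tau>. \<forall>i\<in>\<Theta>. outp A B C D n m (trunc n z) e' k i = outp A B C D n m (\<lambda>_. 0) (\<lambda>_ _. 0) k i"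
      using Z' by (simp add: outp_zero)
  qed
  then show ?thesis by (simp add: trunc_def)
qed


lemma mmul_assoc: "mmul k (mmul k' X Y) Z = mmul k' X (mmul k Y Z)"
  unfolding mmul_def
  by (intro ext) (simp add: sum_distrib_left sum_distrib_right mult.assoc sum.swap[of _ "{..<k}"])

lemma mvs_mmul: "finite S \<Longrightarrow> mvs {..<n} M (\<lambda>l. mvs S N x l) i = mvs S (mmul n M N) x i"
  unfolding mvs_def mmul_def
  by (simp add: sum_distrib_left sum_distrib_right mult.assoc sum.swap[of _ S])

lemma mvs_sum: "mvs S M (\<lambda>l. \<Sum>j\<in>J. f j l) i = (\<Sum>j\<in>J. mvs S M (f j) i)"
  unfolding mvs_def by (simp add: sum_distrib_left sum.swap[of _ J])

lemma mvs_id: "i < n \<Longrightarrow> mvs {..<n} (mpow n A 0) x i = x i"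
proof -
  assume i: "i < n"
  have "mvs {..<n} (mpow n A 0) x i = (\<Sum>j<n. if i = j then x j else 0)"
    unfolding mvs_def mpow.simps by (rule sum.cong) auto
  then show ?thesis using i by (simp add: sum.delta)
qed

lemma mmul_id: "i < n \<Longrightarrow> mmul n (mpow n A 0) B i r = B i r"
proof -
  assume i: "i < n"
  have "mmul n (mpow n A 0) B i r = (\<Sum>j<n. if i = j then B j r else 0)"
    unfolding mmul_def mpow.simps by (rule sum.cong) auto
  then show ?thesis using i by (simp add: sum.delta)
qed

lemma state_formula:
  "i < n \<Longrightarrow> state A B n m x0 u k i = mvs {..<n} (mpow n A k) x0 i +
     (\<Sum>j<k. mvs {..<m} (mmul n (mpow n A (k - j - 1)) B) (u j) i)"
proof (induction k arbitrary: i)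
  case 0 then show ?case by (simp del: mpow.simps add: mvs_id)
next
  case (Suc k)
  let ?F = "\<lambda>l. mvs {..<n} (mpow n A k) x0 l +
     (\<Sum>j<k. mvs {..<m} (mmul n (mpow n A (k - j - 1)) B) (u j) l)"
  have "mvs {..<n} A (state A B n m x0 u k) i = mvs {..<n} A ?F i"
    by (rule mvs_cong_lt) (use Suc.IH in simp)
  also have "\<dots> = mvs {..<n} (mpow n A (Suc k)) x0 i +
     (\<Sum>j<k. mvs {..<m} (mmul n (mpow n A (Suc k - j - 1)) B) (u j) i)"
  proof -
    have "mvs {..<n} A ?F i = mvs {..<n} A (\<lambda>l. mvs {..<n} (mpow n A k) x0 l) i +
        mvs {..<n} A (\<lambda>l. \<Sum>j<k. mvs {..<m} (mmul n (mpow n A (k - j - 1)) B) (u j) l) i"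
      by (rule mvs_add) simp
    also have "\<dots> = mvs {..<n} (mpow n A (Suc k)) x0 i +
        (\<Sum>j<k. mvs {..<m} (mmul n A (mmul n (mpow n A (k - j - 1)) B)) (u j) i)"
      by (simp add: mvs_mmul mvs_sum)
    also have "(\<Sum>j<k. mvs {..<m} (mmul n A (mmul n (mpow n A (k - j - 1)) B)) (u j) i) =
        (\<Sum>j<k. mvs {..<m} (mmul n (mpow n A (Suc k - j - 1)) B) (u j) i)"
    proof (rule sum.cong)
      fix j assume "j \<in> {..<k}"
      hence "Suc k - j - 1 = Suc (k - j - 1)" by auto
      then show "mvs {..<m} (mmul n A (mmul n (mpow n A (k - j - 1)) B)) (u j) i =
          mvs {..<m} (mmul n (mpow n A (Suc k - j - 1)) B) (u j) i"
        by (simp add: mmul_assoc)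
    qed simp
    finally show ?thesis .
  qed
  finally have 1: "mvs {..<n} A (state A B n m x0 u k) i = \<dots>" .
  have 2: "mvs {..<m} B (u k) i = mvs {..<m} (mmul n (mpow n A (Suc k - k - 1)) B) (u k) i"
    using Suc.prems mmul_id[of i n A B] by (simp del: mpow.simps add: mvs_def)
  show ?case using 1 2 by simp
qed

lemma outp_formula:
  assumes "k < n"
  shows "outp A B C D n m x0 u k i = mvs {..<n} (obs_block n A C k) x0 i +
     (\<Sum>j<n. mvs {..<m} (toep_block n A B C D k j) (u j) i)"
proof -
  let ?F = "\<lambda>l. mvs {..<n} (mpow n A k) x0 l +
     (\<Sum>j<k. mvs {..<m} (mmul n (mpow n A (k - j - 1)) B) (u j) l)"
  have "mvs {..<n} C (state A B n m x0 u k) i = mvs {..<n} C ?F i"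
    by (rule mvs_cong_lt) (simp add: state_formula)
  also have "\<dots> = mvs {..<n} (obs_block n A C k) x0 i +
     (\<Sum>j<k. mvs {..<m} (toep_block n A B C D k j) (u j) i)"
  proof -
    have "mvs {..<n} C ?F i = mvs {..<n} C (\<lambda>l. mvs {..<n} (mpow n A k) x0 l) i +
        mvs {..<n} C (\<lambda>l. \<Sum>j<k. mvs {..<m} (mmul n (mpow n A (k - j - 1)) B) (u j) l) i"
      by (rule mvs_add) simp
    also have "\<dots> = mvs {..<n} (obs_block n A C k) x0 i +
        (\<Sum>j<k. mvs {..<m} (mmul n C (mmul n (mpow n A (k - j - 1)) B)) (u j) i)"
      by (simp add: mvs_mmul mvs_sum obs_block_def)
    also have "(\<Sum>j<k. mvs {..<m} (mmul n C (mmul n (mpow n A (k - j - 1)) B)) (u j) i) =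
        (\<Sum>j<k. mvs {..<m} (toep_block n A B C D k j) (u j) i)"
      by (rule sum.cong) (auto simp: toep_block_def)
    finally show ?thesis .
  qed
  finally have 1: "mvs {..<n} C (state A B n m x0 u k) i = \<dots>" .
  have "(\<Sum>j<n. mvs {..<m} (toep_block n A B C D k j) (u j) i) =
      (\<Sum>j<Suc k. mvs {..<m} (toep_block n A B C D k j) (u j) i)"
    by (rule sum.mono_neutral_right) (use assms in \<open>auto simp: toep_block_def mvs_def\<close>)
  also have "\<dots> = (\<Sum>j<k. mvs {..<m} (toep_block n A B C D k j) (u j) i) + mvs {..<m} D (u k) i"
    by (simp add: toep_block_def)
  finally show ?thesis using 1 by (simp add: outp_def)
qed


lemma mvs_diff: "finite S \<Longrightarrow> mvs S M (\<lambda>a. x a - y a) i = mvs S M x i - mvs S M y i"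
  by (simp add: mvs_def sum_subtractf algebra_simps)

lemma mvs_restrict: "\<Gamma> \<subseteq> {..<m} \<Longrightarrow> mvs \<Gamma> M v i = mvs {..<m} M (\<lambda>r. if r \<in> \<Gamma> then v r else 0) i"
proof -
  assume G: "\<Gamma> \<subseteq> {..<m}"
  have "mvs {..<m} M (\<lambda>r. if r \<in> \<Gamma> then v r else 0) i = (\<Sum>r<m. if r \<in> \<Gamma> then M i r * v r else 0)"
    unfolding mvs_def by (rule sum.cong) auto
  also have "\<dots> = (\<Sum>r\<in>{..<m} \<inter> \<Gamma>. M i r * v r)"
    by (simp add: sum.inter_restrict)
  also have "{..<m} \<inter> \<Gamma> = \<Gamma>" using G by blast
  finally show ?thesis by (simp add: mvs_def)
qed

theorem proposition1:
  fixes A B C D :: "nat \<Rightarrow> nat \<Rightarrow> real"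
    and n m p r s t :: nat
    and x w a y :: "nat \<Rightarrow> nat \<Rightarrow> real"
    and \<Gamma>u_star \<Lambda>_star \<Gamma>u \<Gamma>y :: "nat set"
    and xh :: "nat \<Rightarrow> real" and U :: "nat \<Rightarrow> nat \<Rightarrow> real"
  assumes dyn: "\<forall>\<tau>. \<forall>i<n. x (Suc \<tau>) i = mvs {..<n} A (x \<tau>) i + mvs {..<m} B (w \<tau>) i"
    and out: "\<forall>\<tau>. \<forall>i<p. y \<tau> i = mvs {..<n} C (x \<tau>) i + mvs {..<m} D (w \<tau>) i + a \<tau> i"
    and w_supp: "\<Gamma>u_star \<subseteq> {..<m}" "card \<Gamma>u_star \<le> r" "\<forall>\<tau> j. j \<notin> \<Gamma>u_star \<longrightarrow> w \<tau> j = 0"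
    and a_supp: "\<Lambda>_star \<subseteq> {..<p}" "card \<Lambda>_star \<le> s" "\<forall>\<tau> i. i \<notin> \<Lambda>_star \<longrightarrow> a \<tau> i = 0"
    and sso: "sparse_strongly_observable A B C D n m p (2 * r) (2 * s)"
    and t: "n - 1 \<le> t"
    and Gu: "\<Gamma>u \<subseteq> {..<m}" "card \<Gamma>u \<le> r"
    and Gy: "\<Gamma>y \<subseteq> {..<p}" "p - s \<le> card \<Gamma>y"
    and eq: "stacked_eq n A B C D y t \<Gamma>u \<Gamma>y xh U"
  shows "\<forall>i<n. xh i = x (Suc t - n) i"
proof -
  define t0 where "t0 = Suc t - n"
  define G where "G = \<Gamma>u \<union> \<Gamma>u_star"
  define Th where "Th = \<Gamma>y - \<Lambda>_star"
  have G1: "G \<subseteq> {..<m}" using Gu w_supp unfolding G_def by blast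
  have G2: "card G \<le> 2 * r"
    using card_Un_le[of \<Gamma>u \<Gamma>u_star] Gu w_supp unfolding G_def by linarith
  have Th1: "Th \<subseteq> {..<p}" using Gy unfolding Th_def by blast
  have fL: "finite \<Lambda>_star" using a_supp(1) finite_subset by blast
  have "card \<Gamma>y - card \<Lambda>_star \<le> card Th"
    unfolding Th_def using diff_card_le_card_Diff[OF fL] .
  hence Th2: "p - 2 * s \<le> card Th" using Gy(2) a_supp(2) by linarith
  have so: "strongly_observable_sub A B C D n m G Th"
    using sso G1 G2 Th1 Th2 unfolding sparse_strongly_observable_def by blast
  define ws where "ws = (\<lambda>j. w (t0 + j))"
  have traj: "\<forall>i<n. x (t0 + k) i = state A B n m (x t0) ws k i" for k
  proof (induction k)
    case 0 then show ?case by simp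
  next
    case (Suc k)
    show ?case
    proof (intro allI impI)
      fix i assume i: "i < n"
      have "x (t0 + Suc k) i = mvs {..<n} A (x (t0 + k)) i + mvs {..<m} B (w (t0 + k)) i"
        using dyn i by simp
      also have "mvs {..<n} A (x (t0 + k)) i = mvs {..<n} A (state A B n m (x t0) ws k) i"
        by (rule mvs_cong_lt) (use Suc.IH in simp)
      finally show "x (t0 + Suc k) i = state A B n m (x t0) ws (Suc k) i"
        by (simp add: ws_def)
    qed
  qed
  have yo: "y (t0 + k) i = outp A B C D n m (x t0) ws k i + a (t0 + k) i" if "i < p" for k i
  proof -
    have "mvs {..<n} C (x (t0 + k)) i = mvs {..<n} C (state A B n m (x t0) ws k) i"
      by (rule mvs_cong_lt) (use traj in simp)
    then show ?thesis using out that by (simp add: outp_def ws_def)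
  qed
  define Ub where "Ub = (\<lambda>j r. if r \<in> \<Gamma>u then U j r else 0)"
  define z where "z = (\<lambda>i. x t0 i - xh i)"
  define e where "e = (\<lambda>j r. ws j r - Ub j r)"
  have esupp: "\<forall>t j. j \<notin> G \<longrightarrow> e t j = 0"
    using w_supp(3) unfolding e_def Ub_def ws_def G_def by auto
  have Z: "\<forall>k<n. \<forall>i\<in>Th. outp A B C D n m z e k i = 0"
  proof (intro allI impI ballI)
    fix k i assume k: "k < n" and i: "i \<in> Th"
    have ip: "i < p" and ia: "a (t0 + k) i = 0" using i Th1 a_supp(3) unfolding Th_def by auto
    have iy: "i \<in> \<Gamma>y" using i unfolding Th_def by blast
    have "y (t0 + k) i = mvs {..<n} (obs_block n A C k) xh i +
        (\<Sum>j<n. mvs {..<m} (toep_block n A B C D k j) (Ub j) i)"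
      using eq k iy unfolding stacked_eq_def t0_def Ub_def by (simp add: mvs_restrict[OF Gu(1)])
    moreover have "y (t0 + k) i = mvs {..<n} (obs_block n A C k) (x t0) i +
        (\<Sum>j<n. mvs {..<m} (toep_block n A B C D k j) (ws j) i)"
      using yo[OF ip, of k] ia outp_formula[OF k] by simp
    moreover have "outp A B C D n m z e k i = mvs {..<n} (obs_block n A C k) (x t0) i
        - mvs {..<n} (obs_block n A C k) xh i +
        ((\<Sum>j<n. mvs {..<m} (toep_block n A B C D k j) (ws j) i) -
         (\<Sum>j<n. mvs {..<m} (toep_block n A B C D k j) (Ub j) i))"
      unfolding outp_formula[OF k] z_def e_def by (simp add: mvs_diff sum_subtractf)
    ultimately show "outp A B C D n m z e k i = 0" by simp
  qed
  have "\<forall>i<n. z i = 0" using nstep[OF so esupp Z] .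
  then show ?thesis unfolding z_def t0_def by simp
qed

end
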